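(* Let $d,N\in\mathbb{N}$, let $k:\mathbb{R}^d\times\mathbb{R}^d\rightarrow\mathbb{R}$ be a continuous covariance kernel, and let $\{(\bm{x}^{(n)},y^{(n)})\}_{n=1}^N\subset\mathbb{R}^d\times\mathbb{R}$ be training data. Let $\sigma_n^2>0$. Define $\bm{K}\in\mathbb{R}^{N\times N}$ by $K_{ij}=k(\bm{x}^{(i)},\bm{x}^{(j)})$, $\bm{y}=(y^{(1)},\ldots,y^{(N)})^T$, $\bm{\lambda}=(\bm{K}+\sigma_n^2\bm{I}_N)^{-1}\bm{y}$, $k_i(\bm{z})=k(\bm{x}^{(i)},\bm{z})$ for $i=1,\ldots,N$, and consider the Gaussian process posterior mean function $\mu(\bm{z})=\sum_{i=1}^N \lambda_i k_i(\bm{z})$. Let $\bm{x}\in\mathbb{R}^d$ and $\bm{b}\in\mathbb{R}^d$ with positive entries, and let $H=\{\bm{z}\in\mathbb{R}^d: |z_j-x_j|\leq b_j \text{ for all } j=1,\ldots,d\}$ be the hyperrectangle with center $\bm{x}$ and edge widths $2\bm{b}$. Assume each $k_i$ is differentiable on $H$, and for each $i\in\{1,\ldots,N\}$ and $j\in\{1,\ldots,d\}$ let $\bm{L}_{k,i}^{\partial j}=\begin{bmatrix}u_{ij}\\ \ell_{ij}\end{bmatrix}\in\mathbb{R}^2$ be a vector of partial derivative bounds, i.e. $\ell_{ij}\leq \frac{\partial}{\partial z_j}k_i(\bm{z})\leq u_{ij}$ for all $\bm{z}\in H$ (first entry an upper bound, second entry a lower bound). Define $$\bm{R}(\lambda_i)=\begin{cases}\bm{I}_2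 & \lambda_i>0,\\ \begin{bmatrix}0&1\\1&0\end{bmatrix} & \lambda_i\leq 0,\end{cases}$$ and, for each $j$, the vector $\bm{v}_j=\sum_{i=1}^N \bm{R}(\lambda_i)\lambda_i\bm{L}_{k,i}^{\partial j}\in\mathbb{R}^2$. Then $$L_{\mu}(\bm{x},\bm{b})=\sqrt{\sum_{j=1}^d \max\left\{ (v_{j,1})^2,(v_{j,2})^2 \right\}}$$ is a local Lipschitz constant of $\mu$ on $H$, i.e. $|\mu(\bm{z})-\mu(\bm{z}')|\leq L_{\mu}(\bm{x},\bm{b})\,\|\bm{z}-\bm{z}'\|$ for all $\bm{z},\bm{z}'\in H$, where $\|\cdot\|$ is the Euclidean norm.
   Context: $\bm{I}_n$ denotes the $n\times n$ identity matrix and $\|\cdot\|$ the Euclidean norm. In the paper's notation the constant is written $\sqrt{\sum_{j=1}^d \max\{ (\sum_{i=1}^N\bm{R}(\lambda_i)\lambda_i\bm{L}_{k,i}^{\partial j})^2\}}$, where the square is taken entrywise on the 2-vector and the maximum is over its two entries. *)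

theory Defs
  imports "HOL-Analysis.Analysis"
begin

definition covariance_kernel :: "('a \<Rightarrow> 'a \<Rightarrow> real) \<Rightarrow> bool" where
  "covariance_kernel k \<longleftrightarrow> (\<forall>a b. k a b = k b a) \<and>
     (\<forall>(xs :: 'a list) (c :: real list). length c = length xs \<longrightarrow>
        (\<Sum>i<length xs. \<Sum>j<length xs. c!i * c!j * k (xs!i) (xs!j)) \<ge> 0)"

definition gram :: "('a \<Rightarrow> 'a \<Rightarrow> real) \<Rightarrow> ('n::finite \<Rightarrow> 'a) \<Rightarrow> real^'n^'n" where
  "gram k X = (\<chi> i j. k (X i) (X j))"

definition gp_weights :: "('a \<Rightarrow> 'a \<Rightarrow> real) \<Rightarrow> ('n::finite \<Rightarrow> 'a) \<Rightarrow> real^'n \<Rightarrow> real \<Rightarrow> real^'n" where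
  "gp_weights k X y s2 = matrix_inv (gram k X + s2 *\<^sub>R mat 1) *v y"

definition gp_mean :: "('a \<Rightarrow> 'a \<Rightarrow> real) \<Rightarrow> ('n::finite \<Rightarrow> 'a) \<Rightarrow> real^'n \<Rightarrow> real \<Rightarrow> 'a \<Rightarrow> real" where
  "gp_mean k X y s2 z = (\<Sum>i\<in>UNIV. gp_weights k X y s2 $ i * k (X i) z)"

definition hrect :: "real^'d \<Rightarrow> real^'d \<Rightarrow> (real^'d) set" where
  "hrect x b = {z. \<forall>j. \<bar>z $ j - x $ j\<bar> \<le> b $ j}"

definition partial_within :: "(real^'d \<Rightarrow> real) \<Rightarrow> 'd \<Rightarrow> real^'d \<Rightarrow> (real^'d) set \<Rightarrow> real" where
  "partial_within f j z S = frechet_derivative f (at z within S) (axis j 1)"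

definition Rmat :: "real \<Rightarrow> real^2^2" where
  "Rmat l = (if l > 0 then mat 1 else (\<chi> r c. if r = c then 0 else 1))"

definition vvec :: "real^'n \<Rightarrow> ('n::finite \<Rightarrow> 'd \<Rightarrow> real^2) \<Rightarrow> 'd \<Rightarrow> real^2" where
  "vvec lam Lb j = (\<Sum>i\<in>UNIV. Rmat (lam $ i) *v (lam $ i *\<^sub>R Lb i j))"

definition lip_const :: "real^'n \<Rightarrow> ('n::finite \<Rightarrow> 'd::finite \<Rightarrow> real^2) \<Rightarrow> real" where
  "lip_const lam Lb = sqrt (\<Sum>j\<in>UNIV. max ((vvec lam Lb j $ 1)\<^sup>2) ((vvec lam Lb j $ 2)\<^sup>2))"

end

theory Submission
  imports Defs
begin

lemma Rmat_1: "(Rmat l *v w) $ 1 = (if l > 0 then w $ 1 else w $ 2)"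
  by (simp add: Rmat_def matrix_vector_mult_def sum_2 mat_def)

lemma Rmat_2: "(Rmat l *v w) $ 2 = (if l > 0 then w $ 2 else w $ 1)"
  by (simp add: Rmat_def matrix_vector_mult_def sum_2 mat_def)

lemma lin_expand:
  fixes F :: "real^'d \<Rightarrow> real"
  assumes "linear F"
  shows "F h = (\<Sum>j\<in>UNIV. h $ j * F (axis j 1))"
proof -
  have "F h = F (\<Sum>j\<in>UNIV. h $ j *\<^sub>R axis j 1)"
    using basis_expansion[of h] by (simp add: scalar_mult_eq_scaleR)
  also have "\<dots> = (\<Sum>j\<in>UNIV. h $ j * F (axis j 1))"
    using assms by (simp add: linear_sum linear_scale)
  finally show ?thesis .
qed

lemma sq_between:
  fixes a u l :: real
  assumes "a \<le> u" "l \<le> a"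
  shows "a\<^sup>2 \<le> max (u\<^sup>2) (l\<^sup>2)"
proof (cases "a \<ge> 0")
  case True
  then have "\<bar>a\<bar> \<le> \<bar>u\<bar>" using assms by simp
  then have "a\<^sup>2 \<le> u\<^sup>2" by (simp add: abs_le_square_iff)
  then show ?thesis by simp
next
  case False
  then have "\<bar>a\<bar> \<le> \<bar>l\<bar>" using assms by simp
  then have "a\<^sup>2 \<le> l\<^sup>2" by (simp add: abs_le_square_iff)
  then show ?thesis by simp
qed

theorem theorem2:
  fixes k :: "real^'d \<Rightarrow> real^'d \<Rightarrow> real"
    and X :: "'n::finite \<Rightarrow> real^'d"
    and y :: "real^'n"
    and s2 :: real
    and x b :: "real^'d"
    and Lb :: "'n \<Rightarrow> 'd \<Rightarrow> real^2"
  assumes cont: "continuous_on UNIV (\<lambda>p. k (fst p) (snd p))"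
    and cov: "covariance_kernel k"
    and s2_pos: "s2 > 0"
    and b_pos: "\<forall>j. b $ j > 0"
    and diff: "\<forall>i. k (X i) differentiable_on hrect x b"
    and bounds: "\<forall>i j z. z \<in> hrect x b \<longrightarrow>
        Lb i j $ 2 \<le> partial_within (k (X i)) j z (hrect x b) \<and>
        partial_within (k (X i)) j z (hrect x b) \<le> Lb i j $ 1"
  shows "\<forall>z \<in> hrect x b. \<forall>z' \<in> hrect x b.
    \<bar>gp_mean k X y s2 z - gp_mean k X y s2 z'\<bar>
      \<le> lip_const (gp_weights k X y s2) Lb * norm (z - z')"
proof (intro ballI)
  fix z z' assume z: "z \<in> hrect x b" and z': "z' \<in> hrect x b"
  define H where "H = hrect x b"
  define lam where "lam = gp_weights k X y s2"
  define F where "F = (\<lambda>i w. frechet_derivative (k (X i)) (at w within H))"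
  define G where "G = (\<lambda>w h. \<Sum>i\<in>UNIV. lam $ i * F i w h)"
  have HC: "H = cbox (x - b) (x + b)"
    by (auto simp: H_def hrect_def mem_box_cart abs_le_iff; smt (verit))
  have cvx: "convex H" unfolding HC by (rule convex_box)
  have derF: "(k (X i) has_derivative F i w) (at w within H)" if "w \<in> H" for i w
    using diff that unfolding F_def H_def differentiable_on_def
    by (metis frechet_derivative_works)
  have linF: "linear (F i w)" if "w \<in> H" for i w
    using derF[OF that] has_derivative_linear by blast
  have derG: "(gp_mean k X y s2 has_derivative G w) (at w within H)" if "w \<in> H" for w
  proof -
    have "((\<lambda>z. \<Sum>i\<in>UNIV. lam $ i * k (X i) z) has_derivative (\<lambda>h. \<Sum>i\<in>UNIV. lam $ i * F i w h)) (at w within H)"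
      by (intro has_derivative_sum has_derivative_mult_right derF[OF that])
    then show ?thesis unfolding G_def lam_def gp_mean_def[abs_def] by simp
  qed
  define L where "L = lip_const lam Lb"
  have onB: "onorm (G w) \<le> L" if w: "w \<in> H" for w
  proof (rule onorm_le)
    fix h :: "real^'d"
    define D where "D = (\<chi> j. G w (axis j 1))"
    have "G w h = (\<Sum>j\<in>UNIV. h $ j * G w (axis j 1))"
    proof -
      have "linear (G w)" unfolding G_def
        proof (intro linear_compose_sum ballI)
        fix i assume "i \<in> (UNIV::'n set)"
        have "linear ((\<lambda>t. lam $ i * t) \<circ> F i w)"
          by (intro linear_compose[OF linF[OF w]] bounded_linear.linear bounded_linear_mult_right)
        then show "linear (\<lambda>h. lam $ i * F i w h)" by (simp add: o_def)
      qed
      then show ?thesis by (rule lin_expand)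
    qed
    also have "\<dots> = h \<bullet> D" by (simp add: inner_vec_def D_def)
    finally have "norm (G w h) \<le> norm h * norm D"
      using Cauchy_Schwarz_ineq2[of h D] by simp
    moreover have "norm D \<le> L"
    proof -
      have "(D $ j)\<^sup>2 \<le> max ((vvec lam Lb j $ 1)\<^sup>2) ((vvec lam Lb j $ 2)\<^sup>2)" for j
      proof -
        have Dj: "D $ j = (\<Sum>i\<in>UNIV. lam $ i * partial_within (k (X i)) j w H)"
          by (simp add: D_def G_def F_def partial_within_def)
        have up: "D $ j \<le> vvec lam Lb j $ 1"
          unfolding Dj vvec_def sum_component Rmat_1
        proof (rule sum_mono)
          fix i
          have "Lb i j $ 2 \<le> partial_within (k (X i)) j w H \<and> partial_within (k (X i)) j w H \<le> Lb i j $ 1"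
            using bounds w unfolding H_def by blast
          then show "lam $ i * partial_within (k (X i)) j w H \<le> (if lam $ i > 0 then (lam $ i *\<^sub>R Lb i j) $ 1 else (lam $ i *\<^sub>R Lb i j) $ 2)"
            by (auto intro: mult_left_mono mult_left_mono_neg)
        qed
        have lo: "vvec lam Lb j $ 2 \<le> D $ j"
          unfolding Dj vvec_def sum_component Rmat_2
        proof (rule sum_mono)
          fix i
          have "Lb i j $ 2 \<le> partial_within (k (X i)) j w H \<and> partial_within (k (X i)) j w H \<le> Lb i j $ 1"
            using bounds w unfolding H_def by blast
          then show "(if lam $ i > 0 then (lam $ i *\<^sub>R Lb i j) $ 2 else (lam $ i *\<^sub>R Lb i j) $ 1) \<le> lam $ i * partial_within (k (X i)) j w H"
            by (auto intro: mult_left_mono mult_left_mono_neg)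
        qed
        show ?thesis using up lo
          by (rule sq_between)
      qed
      then have "(\<Sum>j\<in>UNIV. (D $ j)\<^sup>2) \<le> (\<Sum>j\<in>UNIV. max ((vvec lam Lb j $ 1)\<^sup>2) ((vvec lam Lb j $ 2)\<^sup>2))"
        by (rule sum_mono)
      then show ?thesis
        unfolding L_def lip_const_def norm_vec_def L2_set_def by (simp add: real_sqrt_le_mono)
    qed
    ultimately show "norm (G w h) \<le> L * norm h"
      by (smt (verit) mult.commute mult_left_mono norm_ge_zero)
  qed
  have "norm (gp_mean k X y s2 z - gp_mean k X y s2 z') \<le> L * norm (z - z')"
    by (rule differentiable_bound[OF cvx derG onB]) (use z z' H_def in auto)
  then show "\<bar>gp_mean k X y s2 z - gp_mean k X y s2 z'\<bar> \<le> lip_const (gp_weights k X y s2) Lb * norm (z - z')"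
    by (simp add: L_def lam_def)
qed

end
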